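(* For $n \ge 4$ with $n \equiv 4 \pmod 6$, if $G \cong P_n$ and $v$ is an arbitrary vertex of $G$, then $\gamma_{\rm tg}(G|v) \le \gamma_{\rm tg}(G) - 1$.
   Context: Total domination game on a graph without isolated vertices: Dominator and Staller alternately choose vertices, each chosen vertex must be adjacent to some vertex not yet totally dominated; the game ends when no legal move exists; Dominator minimizes, Staller maximizes the number of moves; $\gamma_{\rm tg}(G)$ is the number of moves in the Dominator-start game under optimal play. $G|v$ is $G$ with $v$ declared already totally dominated, and $\gamma_{\rm tg}(G|v)$ is the corresponding optimal number of moves in the Dominator-start game. *)

theory Defs
  imports Main
begin

text \<open>Graphs: a vertex set V together with an adjacency relation E (only its
restriction to V matters).  The open neighbourhood of x in V:\<close>

definition nbhd :: "('a \<Rightarrow> 'a \<Rightarrow> bool) \<Rightarrow> 'a set \<Rightarrow> 'a \<Rightarrow> 'a set" where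
  "nbhd E V x = {y \<in> V. E x y}"

definition legal_moves :: "('a \<Rightarrow> 'a \<Rightarrow> bool) \<Rightarrow> 'a set \<Rightarrow> 'a set \<Rightarrow> 'a set" where
  "legal_moves E V D = {x \<in> V. \<not> nbhd E V x \<subseteq> D}"

text \<open>Optimal number of remaining moves of the total domination game, where
D is the set of already totally dominated vertices and the flag says whether
Dominator (True) or Staller (False) is to move.  Dominator minimises, Staller
maximises.  (The value 0 for infinite V is a dummy.)\<close>

function tg_val :: "('a \<Rightarrow> 'a \<Rightarrow> bool) \<Rightarrow> 'a set \<Rightarrow> bool \<Rightarrow> 'a set \<Rightarrow> nat" where
  "tg_val E V dmove D =
    (if finite V \<and> legal_moves E V D \<noteq> {} then
       (if dmove
        then Min ((\<lambda>x. Suc (tg_val E V False (D \<union> nbhd E V x))) ` legal_moves E V D)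
        else Max ((\<lambda>x. Suc (tg_val E V True (D \<union> nbhd E V x))) ` legal_moves E V D))
     else 0)"
  by pat_completeness auto
termination
proof (relation "measure (\<lambda>(E, V, b, D). card (V - D))")
  show "wf (measure (\<lambda>(E, V, b, D). card (V - D)))" by simp
next
  fix E :: "'a \<Rightarrow> 'a \<Rightarrow> bool" and V D x and b :: bool
  assume "finite V \<and> legal_moves E V D \<noteq> {}" and "x \<in> legal_moves E V D"
  then have fin: "finite V" and nx: "\<not> nbhd E V x \<subseteq> D" by (auto simp: legal_moves_def)
  then obtain y where y: "y \<in> nbhd E V x" "y \<notin> D" by auto
  have yV: "y \<in> V" using y by (simp add: nbhd_def)
  have "V - (D \<union> nbhd E V x) \<subset> V - D" using y yV by auto
  then have "card (V - (D \<union> nbhd E V x)) < card (V - D)"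
    using fin by (intro psubset_card_mono) auto
  then show "((E, V, False, D \<union> nbhd E V x), E, V, b, D) \<in> measure (\<lambda>(E, V, b, D). card (V - D))"
   and "((E, V, True, D \<union> nbhd E V x), E, V, b, D) \<in> measure (\<lambda>(E, V, b, D). card (V - D))"
    by simp_all
qed

definition gamma_tg :: "('a \<Rightarrow> 'a \<Rightarrow> bool) \<Rightarrow> 'a set \<Rightarrow> nat" where
  "gamma_tg E V = tg_val E V True {}"

definition gamma_tg_pre :: "('a \<Rightarrow> 'a \<Rightarrow> bool) \<Rightarrow> 'a set \<Rightarrow> 'a \<Rightarrow> nat" where
  "gamma_tg_pre E V v = tg_val E V True {v}"

definition iso_path :: "('a \<Rightarrow> 'a \<Rightarrow> bool) \<Rightarrow> 'a set \<Rightarrow> nat \<Rightarrow> bool" where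
  "iso_path E V n \<longleftrightarrow> (\<exists>f. bij_betw f {..<n} V \<and>
     (\<forall>i<n. \<forall>j<n. E (f i) (f j) \<longleftrightarrow> (i + 1 = j \<or> j + 1 = i)))"

end

theory Submission
  imports Defs
begin


fun rF :: "(nat \<Rightarrow> nat) \<Rightarrow> nat \<Rightarrow> bool list \<Rightarrow> nat" where
  "rF g acc [] = g acc"
| "rF g acc (b # bs) = (if b then rF g (Suc acc) bs else g acc + rF g 0 bs)"

fun tr :: "nat \<Rightarrow> bool list \<Rightarrow> nat" where
  "tr acc [] = acc"
| "tr acc (b # bs) = (if b then tr (Suc acc) bs else tr 0 bs)"

fun ld :: "bool list \<Rightarrow> nat" where
  "ld [] = 0"
| "ld (b # bs) = (if b then Suc (ld bs) else 0)"

lemma rF_app: "rF g acc (xs @ ys) + g (tr acc xs) = rF g acc xs + rF g (tr acc xs) ys"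
  by (induction xs arbitrary: acc) auto

lemma rF_rep: "rF g acc (replicate s True @ rest) = rF g (acc + s) rest"
  by (induction s arbitrary: acc) auto

lemma ld_dec: "\<exists>rest. zs = replicate (ld zs) True @ rest \<and> (rest = [] \<or> hd rest = False)"
  by (induction zs) auto

lemma rF_rest: "g 0 = 0 \<Longrightarrow> rest = [] \<or> hd rest = False \<Longrightarrow> rF g c rest = g c + rF g 0 (tl rest)"
  by (cases rest) auto

lemma loc:
  assumes "g 0 = 0"
  shows "\<exists>R. rF g t (False # False # zs) = g t + g (ld zs) + R
     \<and> rF g t (True # True # zs) = g (t + ld zs + 2) + R
     \<and> rF g t (True # False # zs) = g (Suc t) + g (ld zs) + R
     \<and> rF g t (False # True # zs) = g t + g (Suc (ld zs)) + R"
proof -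
  define s where "s = ld zs"
  obtain rest where zs: "zs = replicate s True @ rest" and r: "rest = [] \<or> hd rest = False"
    using ld_dec s_def by blast
  have key: "rF g c zs = g (c + s) + rF g 0 (tl rest)" for c
    unfolding zs rF_rep using rF_rest[of g rest, OF assms r] by simp
  show ?thesis
    by (rule exI[of _ "rF g 0 (tl rest)"]) (simp add: key assms s_def[symmetric])
qed

lemma decomp:
  assumes "Suc k < length Q"
  shows "Q = take k Q @ [Q!k, Q!Suc k] @ drop (Suc (Suc k)) Q"
    and "Q[k:=False, Suc k:=False] = take k Q @ [False,False] @ drop (Suc (Suc k)) Q"
proof -
  have d1: "drop k Q = Q!k # drop (Suc k) Q" using assms by (simp add: Cons_nth_drop_Suc)
  have d2: "drop (Suc k) Q = Q!Suc k # drop (Suc (Suc k)) Q" using assms by (simp add: Cons_nth_drop_Suc)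
  show "Q = take k Q @ [Q!k, Q!Suc k] @ drop (Suc (Suc k)) Q"
    using append_take_drop_id[of k Q] d1 d2 by simp
  show "Q[k:=False, Suc k:=False] = take k Q @ [False,False] @ drop (Suc (Suc k)) Q"
    using assms by (simp add: upd_conv_take_nth_drop take_Suc_conv_app_nth min_def)
qed

definition wa :: "nat \<Rightarrow> nat" where
  "wa L = 4*L + (if L mod 3 = 1 then 2 else if L mod 3 = 2 then 1 else 0)"
definition w2 :: "nat \<Rightarrow> nat" where
  "w2 L = (if L mod 3 = 2 then 1 else 0)"

lemma core2: "wa t + wa s + 6 \<le> wa (t+s+2) \<or> (wa t + wa s + 3 \<le> wa (t+s+2) \<and> odd (w2 (t+s+2) + w2 t + w2 s))"
  proof -
  have "t mod 3 = 0 \<or> t mod 3 = 1 \<or> t mod 3 = 2" "s mod 3 = 0 \<or> s mod 3 = 1 \<or> s mod 3 = 2" by auto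
  then show ?thesis unfolding wa_def w2_def by (elim disjE; simp add: mod_add_eq[symmetric]; presburger)
qed

lemma core1: "wa t + 6 \<le> wa (Suc t) \<or> (wa t + 3 \<le> wa (Suc t) \<and> odd (w2 (Suc t) + w2 t))"
  unfolding wa_def w2_def by presburger

lemma comb:
  assumes "(A::nat) + wt = X + p + R" "A' + wt = X + q + R" "C + vt = Y + P + S" "C' + vt = Y + Qq + S"
    "q + 6 \<le> p \<or> (q+3 \<le> p \<and> odd (P + Qq))"
  shows "6 + A' \<le> A + 3*(C mod 2) + 3*(C' mod 2)"
proof -
  have e1: "A + q = A' + p" using assms(1,2) by linarith
  have e2: "C + C' + 2*vt = 2*Y + P + Qq + 2*S" using assms(3,4) by linarith
  have par: "odd (P + Qq) \<Longrightarrow> C mod 2 + C' mod 2 = 1"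
  proof -
    assume o: "odd (P + Qq)"
    have "odd (C + C')" using e2 o by presburger
    then show ?thesis by presburger
  qed
  show ?thesis using assms(5) e1 par by linarith
qed


lemma wa0[simp]: "wa 0 = 0" and w20[simp]: "w2 0 = 0" by (simp_all add: wa_def w2_def)

lemma app0: "rF g 0 (xs @ ys) + g (tr 0 xs) = rF g 0 xs + rF g (tr 0 xs) ys"
  by (rule rF_app)

lemma smove:
  assumes "b1 \<or> b2"
  shows "6 + rF wa 0 (xs @ [False,False] @ zs) \<le> rF wa 0 (xs @ [b1,b2] @ zs)
     + 3*(rF w2 0 (xs @ [b1,b2] @ zs) mod 2) + 3*(rF w2 0 (xs @ [False,False] @ zs) mod 2)"
proof -
  define t where "t = tr 0 xs"
  define s where "s = ld zs"
  obtain Ra where Ra: "rF wa t (False # False # zs) = wa t + wa s + Ra"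
     "rF wa t (True # True # zs) = wa (t + s + 2) + Ra"
     "rF wa t (True # False # zs) = wa (Suc t) + wa s + Ra"
     "rF wa t (False # True # zs) = wa t + wa (Suc s) + Ra"
    using loc[of wa t zs] unfolding s_def by auto
  obtain Rt where Rt: "rF w2 t (False # False # zs) = w2 t + w2 s + Rt"
     "rF w2 t (True # True # zs) = w2 (t + s + 2) + Rt"
     "rF w2 t (True # False # zs) = w2 (Suc t) + w2 s + Rt"
     "rF w2 t (False # True # zs) = w2 t + w2 (Suc s) + Rt"
    using loc[of w2 t zs] unfolding s_def by auto
  have a1: "rF wa 0 (xs @ ys) + wa t = rF wa 0 xs + rF wa t ys" for ys
    using app0[of wa xs ys] t_def by simp
  have a2: "rF w2 0 (xs @ ys) + w2 t = rF w2 0 xs + rF w2 t ys" for ys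
    using app0[of w2 xs ys] t_def by simp
  have c1: "odd (w2 (Suc t) + w2 s + (w2 t + w2 s))" if "odd (w2 (Suc t) + w2 t)"
    using that by auto
  have c1': "odd (w2 t + w2 (Suc s) + (w2 t + w2 s))" if "odd (w2 (Suc s) + w2 s)"
    using that by auto
  have c2: "odd (w2 (t + s + 2) + (w2 t + w2 s))" if "odd (w2 (t + s + 2) + w2 t + w2 s)"
    using that by (simp add: add.assoc)
  consider "b1" "b2" | "b1" "\<not> b2" | "\<not> b1" "b2" using assms by blast
  then show ?thesis
  proof cases
    case 1
    show ?thesis
      apply (rule comb[where wt = "wa t" and X = "rF wa 0 xs" and R = Ra and vt = "w2 t"
            and Y = "rF w2 0 xs" and S = Rt and p = "wa (t+s+2)" and q = "wa t + wa s"
            and P = "w2 (t+s+2)" and Qq = "w2 t + w2 s"])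
      using 1 a1 a2 Ra Rt core2[of t s] c2 by auto
  next
    case 2
    show ?thesis
      apply (rule comb[where wt = "wa t" and X = "rF wa 0 xs" and R = Ra and vt = "w2 t"
            and Y = "rF w2 0 xs" and S = Rt and p = "wa (Suc t) + wa s" and q = "wa t + wa s"
            and P = "w2 (Suc t) + w2 s" and Qq = "w2 t + w2 s"])
      using 2 a1 a2 Ra Rt core1[of t] c1 by auto
  next
    case 3
    show ?thesis
      apply (rule comb[where wt = "wa t" and X = "rF wa 0 xs" and R = Ra and vt = "w2 t"
            and Y = "rF w2 0 xs" and S = Rt and p = "wa t + wa (Suc s)" and q = "wa t + wa s"
            and P = "w2 t + w2 (Suc s)" and Qq = "w2 t + w2 s"])
      using 3 a1 a2 Ra Rt core1[of s] c1' by auto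
  qed
qed

lemma cnt:
  "rF id 0 (xs @ [b1,b2] @ zs) = rF id 0 (xs @ [False,False] @ zs) + (if b1 then 1 else 0) + (if b2 then 1 else 0)"
proof -
  define t where "t = tr 0 xs"
  define s where "s = ld zs"
  obtain R where R: "rF id t (False # False # zs) = id t + id s + R"
     "rF id t (True # True # zs) = id (t + s + 2) + R"
     "rF id t (True # False # zs) = id (Suc t) + id s + R"
     "rF id t (False # True # zs) = id t + id (Suc s) + R"
    using loc[of id t zs] unfolding s_def by auto
  have a1: "rF id 0 (xs @ ys) + id t = rF id 0 xs + rF id t ys" for ys
    using app0[of id xs ys] t_def by simp
  show ?thesis using a1[of "[b1,b2] @ zs"] a1[of "[False,False] @ zs"] R by (cases b1; cases b2) auto
qed

lemma run_wit:
  assumes "rF g acc ps \<noteq> 0" "g 0 = 0"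
  shows "\<exists>xs L zs. replicate acc True @ ps = xs @ replicate L True @ zs \<and> (xs = [] \<or> last xs = False)
     \<and> (zs = [] \<or> hd zs = False) \<and> g L \<noteq> 0"
  using assms
proof (induction ps arbitrary: acc)
  case Nil
  then show ?case by (intro exI[of _ "[]"] exI[of _ acc]) auto
next
  case (Cons b ps)
  show ?case
  proof (cases b)
    case True
    then have "rF g (Suc acc) ps \<noteq> 0" using Cons.prems by simp
    from Cons.IH[OF this Cons.prems(2)] obtain xs L zs where
      "replicate (Suc acc) True @ ps = xs @ replicate L True @ zs" "xs = [] \<or> last xs = False"
      "zs = [] \<or> hd zs = False" "g L \<noteq> 0" by blast
    then show ?thesis using True by (intro exI[of _ xs] exI[of _ L] exI[of _ zs])
      (simp add: replicate_app_Cons_same)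
  next
    case False
    then have h: "g acc + rF g 0 ps \<noteq> 0" using Cons.prems by simp
    show ?thesis
    proof (cases "g acc = 0")
      case False
      then show ?thesis using \<open>\<not> b\<close>
        by (intro exI[of _ "[]"] exI[of _ acc] exI[of _ "b # ps"]) auto
    next
      case True
      then have "rF g 0 ps \<noteq> 0" using h by simp
      from Cons.IH[OF this Cons.prems(2)] obtain xs L zs where
        "ps = xs @ replicate L True @ zs" "xs = [] \<or> last xs = False"
        "zs = [] \<or> hd zs = False" "g L \<noteq> 0" by auto
      then show ?thesis using \<open>\<not> b\<close>
        by (intro exI[of _ "replicate acc True @ b # xs"] exI[of _ L] exI[of _ zs]) auto
    qed
  qed
qed

lemma tr_last: "xs \<noteq> [] \<Longrightarrow> last xs = False \<Longrightarrow> tr acc xs = 0"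
  by (induction xs arbitrary: acc) (auto split: if_splits)

lemma rF_F: "g 0 = 0 \<Longrightarrow> rF g 0 (replicate c False @ ys) = rF g 0 ys"
  by (induction c) auto

lemma runval:
  assumes "g 0 = 0" "xs \<noteq> []" "last xs = False" "zs \<noteq> []" "hd zs = False"
  shows "rF g 0 (xs @ replicate c False @ replicate l True @ zs) = rF g 0 xs + g l + rF g 0 (tl zs)"
proof -
  have "rF g 0 (xs @ ys) = rF g 0 xs + rF g 0 ys" for ys
    using app0[of g xs ys] tr_last[OF assms(2,3)] assms(1) by simp
  moreover have "rF g 0 (replicate l True @ zs) = g l + rF g 0 (tl zs)"
    using rF_rep[of g 0 l zs] rF_rest[of g zs l] assms by simp
  ultimately show ?thesis using rF_F[of g, OF assms(1)] by simp
qed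

lemma wa_step: "L \<ge> 2 \<Longrightarrow> wa L = wa (L-2) + (if L mod 3 = 0 then 6 else 9)"
proof -
  assume "L \<ge> 2"
  then obtain M where M: "L = M + 2" by (metis add.commute le_Suc_ex)
  have "M mod 3 = 0 \<or> M mod 3 = 1 \<or> M mod 3 = 2" by auto
  then show ?thesis unfolding M wa_def by (elim disjE; simp add: mod_add_eq[symmetric]; presburger)
qed

lemma w2_step: "L \<ge> 2 \<Longrightarrow> w2 L + (if L mod 3 = 1 then 1 else 0) = w2 (L-2) + (if L mod 3 = 2 then 1 else 0)"
proof -
  assume "L \<ge> 2"
  then obtain M where M: "L = M + 2" by (metis add.commute le_Suc_ex)
  have "M mod 3 = 0 \<or> M mod 3 = 1 \<or> M mod 3 = 2" by auto
  then show ?thesis unfolding M w2_def by (elim disjE; simp add: mod_add_eq[symmetric]; presburger)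
qed

lemma dmove_arith:
  assumes "A = X + wa L + R" "A' = X + wa (L - min L 2) + R" "C = Y + w2 L + S" "C' = Y + w2 (L - min L 2) + S"
    "odd C \<Longrightarrow> L mod 3 = 2" "L \<ge> 1"
  shows "6 + A' + 3 * (C' mod 2) + 3 * (C mod 2) \<le> A"
proof (cases "L = 1")
  case True
  then have "even C" using assms(5) by auto
  moreover have "C' = C" "A = A' + 6" using True assms(1-4) by (simp_all add: wa_def w2_def)
  ultimately show ?thesis by simp
next
  case False
  then have L2: "L - min L 2 = L - 2" "L \<ge> 2" using assms(6) by auto
  note ws = wa_step[OF L2(2)] w2_step[OF L2(2)]
  have "L mod 3 = 0 \<or> L mod 3 = 1 \<or> L mod 3 = 2" by auto
  then show ?thesis
  proof (elim disjE)
    assume h: "L mod 3 = 0"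
    then have "A = A' + 6" "C = C'" using ws assms(1-4) L2 by auto
    moreover have "even C" using assms(5) h by auto
    ultimately show ?thesis by simp
  next
    assume h: "L mod 3 = 1"
    then have "A = A' + 9" "C + 1 = C'" using ws assms(1-4) L2 by auto
    moreover have "C mod 2 + C' mod 2 = 1" using calculation(2) by presburger
    ultimately show ?thesis by simp
  next
    assume h: "L mod 3 = 2"
    then have "A = A' + 9" "C = C' + 1" using ws assms(1-4) L2 by auto
    moreover have "C mod 2 + C' mod 2 = 1" using calculation(2) by presburger
    ultimately show ?thesis by simp
  qed
qed



definition padj :: "nat \<Rightarrow> nat \<Rightarrow> bool" where "padj i j \<longleftrightarrow> Suc i = j \<or> Suc j = i"

definition qf :: "nat \<Rightarrow> nat set \<Rightarrow> nat \<Rightarrow> bool" where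
  "qf m D i = (if 1 \<le> i \<and> i \<le> m then 2*(i-1) \<notin> D
     else if m+3 \<le> i \<and> i \<le> 2*m+2 then 2*(i-m-3)+1 \<notin> D else False)"

definition QL :: "nat \<Rightarrow> nat set \<Rightarrow> bool list" where
  "QL m D = map (qf m D) [0..<2*m+4]"

definition kx :: "nat \<Rightarrow> nat \<Rightarrow> nat" where
  "kx m x = (if odd x then (x+1) div 2 else m+2 + x div 2)"

lemma nb: "nbhd padj {..<2*m} x = {y. y < 2*m \<and> (Suc x = y \<or> Suc y = x)}"
  by (auto simp: nbhd_def padj_def)

lemma QL_len[simp]: "length (QL m D) = 2*m+4" by (simp add: QL_def)
lemma QL_nth: "i < 2*m+4 \<Longrightarrow> QL m D ! i = qf m D i" by (simp add: QL_def)

lemma kx_lt: "x < 2*m \<Longrightarrow> Suc (kx m x) < 2*m+4" by (auto simp: kx_def)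

lemma qf_upd:
  assumes "x < 2*m"
  shows "qf m (D \<union> nbhd padj {..<2*m} x) i = (i \<noteq> kx m x \<and> i \<noteq> Suc (kx m x) \<and> qf m D i)"
proof (cases "odd x")
  case True
  then obtain j where j: "x = 2*j+1" by (metis oddE)
  show ?thesis using assms unfolding nb qf_def kx_def j by auto presburger+
next
  case False
  then obtain j where j: "x = 2*j" by (metis evenE)
  show ?thesis using assms unfolding nb qf_def kx_def j by auto presburger+
qed


lemma QL_upd:
  assumes "x < 2*m"
  shows "QL m (D \<union> nbhd padj {..<2*m} x) = (QL m D)[kx m x := False, Suc (kx m x) := False]"
proof (rule nth_equalityI)
  show "length (QL m (D \<union> nbhd padj {..<2 * m} x)) = length ((QL m D)[kx m x := False, Suc (kx m x) := False])"
    by simp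
  fix i assume "i < length (QL m (D \<union> nbhd padj {..<2 * m} x))"
  then have i: "i < 2*m+4" by simp
  show "QL m (D \<union> nbhd padj {..<2 * m} x) ! i = (QL m D)[kx m x := False, Suc (kx m x) := False] ! i"
    using i kx_lt[OF assms] by (simp add: QL_nth qf_upd[OF assms] nth_list_update)
qed

lemma ex_nb:
  "(\<exists>y. y < 2*m \<and> (Suc x = y \<or> Suc y = x) \<and> y \<notin> D) \<longleftrightarrow>
    (Suc x < 2*m \<and> Suc x \<notin> D) \<or> (x \<ge> 1 \<and> x < Suc (2*m) \<and> x - 1 \<notin> D)"
proof
  assume "\<exists>y. y < 2*m \<and> (Suc x = y \<or> Suc y = x) \<and> y \<notin> D"
  then show "(Suc x < 2*m \<and> Suc x \<notin> D) \<or> (x \<ge> 1 \<and> x < Suc (2*m) \<and> x - 1 \<notin> D)" by auto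
next
  assume "(Suc x < 2*m \<and> Suc x \<notin> D) \<or> (x \<ge> 1 \<and> x < Suc (2*m) \<and> x - 1 \<notin> D)"
  then show "\<exists>y. y < 2*m \<and> (Suc x = y \<or> Suc y = x) \<and> y \<notin> D"
  proof
    assume "Suc x < 2*m \<and> Suc x \<notin> D" then show ?thesis by blast
  next
    assume h: "x \<ge> 1 \<and> x < Suc (2*m) \<and> x - 1 \<notin> D"
    show ?thesis by (rule exI[of _ "x - 1"]) (use h in auto)
  qed
qed

lemma legal_iff:
  "x \<in> legal_moves padj {..<2*m} D \<longleftrightarrow> x < 2*m \<and> (QL m D ! kx m x \<or> QL m D ! Suc (kx m x))"
proof (cases "x < 2*m")
  case True
  have "QL m D ! kx m x \<or> QL m D ! Suc (kx m x) \<longleftrightarrow> qf m D (kx m x) \<or> qf m D (Suc (kx m x))"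
    using kx_lt[OF True] by (simp add: QL_nth)
  also have "\<dots> \<longleftrightarrow> (Suc x < 2*m \<and> Suc x \<notin> D) \<or> (x \<ge> 1 \<and> x < Suc (2*m) \<and> x - 1 \<notin> D)"
  proof (cases "odd x")
    case True
    then obtain j where j: "x = 2*j+1" by (metis oddE)
    show ?thesis using \<open>x < 2*m\<close> unfolding qf_def kx_def j by auto
  next
    case False
    then obtain j where j: "x = 2*j" by (metis evenE)
    have ar: "Suc (Suc (2*n)) < 2*m \<Longrightarrow> Suc (Suc (Suc (2*n))) < 2*m" for n by presburger
    show ?thesis using \<open>x < 2*m\<close> unfolding qf_def kx_def j by (cases j) (auto simp: ar)
  qed
  also have "\<dots> \<longleftrightarrow> (\<exists>y. y < 2*m \<and> (Suc x = y \<or> Suc y = x) \<and> y \<notin> D)"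
    by (rule ex_nb[symmetric])
  finally show ?thesis using True unfolding legal_moves_def nb by auto
qed (auto simp: legal_moves_def)

lemma kinv:
  assumes "(1 \<le> k \<and> k \<le> m) \<or> (m+2 \<le> k \<and> k \<le> 2*m+1)"
  shows "\<exists>x<2*m. kx m x = k"
  using assms
proof
  assume h: "1 \<le> k \<and> k \<le> m"
  show ?thesis by (rule exI[of _ "2*k-1"]) (use h in \<open>auto simp: kx_def\<close>)
next
  assume h: "m+2 \<le> k \<and> k \<le> 2*m+1"
  show ?thesis by (rule exI[of _ "2*(k-m-2)"]) (use h in \<open>auto simp: kx_def\<close>)
qed

lemma qf_range: "qf m D i \<Longrightarrow> (1 \<le> i \<and> i \<le> m) \<or> (m+3 \<le> i \<and> i \<le> 2*m+2)"
  by (auto simp: qf_def split: if_splits)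

lemma QL_true: "i < length (QL m D) \<Longrightarrow> QL m D ! i \<Longrightarrow> (1 \<le> i \<and> i \<le> m) \<or> (m+3 \<le> i \<and> i \<le> 2*m+2)"
  by (metis QL_len QL_nth qf_range)

lemma rF_id_pos: "True \<in> set ps \<or> acc > 0 \<Longrightarrow> rF id acc ps \<noteq> 0"
proof (induction ps arbitrary: acc)
  case Nil then show ?case by simp
next
  case (Cons a ps)
  show ?case
  proof (cases a)
    case True then show ?thesis using Cons.IH[of "Suc acc"] by simp
  next
    case False
    then have "True \<in> set ps \<or> acc > 0" using Cons.prems by auto
    then show ?thesis using Cons.IH[of 0] False by auto
  qed
qed

lemma run_in_QL:
  assumes "rF g 0 (QL m D) \<noteq> 0" "g 0 = 0"
  shows "\<exists>xs L zs. QL m D = xs @ replicate L True @ zs \<and> xs \<noteq> [] \<and> last xs = False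
     \<and> zs \<noteq> [] \<and> hd zs = False \<and> g L \<noteq> 0 \<and> L \<ge> 1"
proof -
  obtain xs L zs where h: "QL m D = xs @ replicate L True @ zs" "xs = [] \<or> last xs = False"
     "zs = [] \<or> hd zs = False" "g L \<noteq> 0"
    using run_wit[OF assms] by auto
  have L: "L \<ge> 1" using h(4) assms(2) by (cases L) auto
  have q0: "\<not> QL m D ! 0" by (simp add: QL_nth qf_def)
  have ql: "\<not> QL m D ! (2*m+3)" by (simp add: QL_nth qf_def)
  have "xs \<noteq> []"
  proof
    assume "xs = []"
    then have "QL m D ! 0 = True" using h(1) L by (cases L) auto
    then show False using q0 by simp
  qed
  moreover have "zs \<noteq> []"
  proof
    assume "zs = []"
    then have "last (QL m D) = True" using h(1) L by simp
    moreover have "last (QL m D) = qf m D (3 + 2*m)"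
      by (subst last_conv_nth) (auto simp: QL_def simp del: upt_Suc)
    moreover have "\<not> qf m D (3 + 2*m)" by (simp add: qf_def)
    ultimately show False by simp
  qed
  ultimately show ?thesis using h L by blast
qed



lemma upd2:
  "L \<ge> 2 \<Longrightarrow> (xs @ replicate L True @ zs)[length xs := False, Suc (length xs) := False]
     = xs @ replicate 2 False @ replicate (L-2) True @ zs"
proof -
  assume "L \<ge> 2"
  then obtain L' where "L = Suc (Suc L')" by (metis add_2_eq_Suc le_Suc_ex)
  then show ?thesis by (simp add: list_update_append numeral_2_eq_2)
qed

lemma upd1r:
  "(xs @ [True] @ False # zs)[length xs := False, Suc (length xs) := False] = xs @ [False] @ False # zs"
  by (simp add: list_update_append)

lemma upd1l:
  "(xs @ [False] @ [True] @ zs)[length xs := False, Suc (length xs) := False] = xs @ [False] @ [False] @ zs"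
  by (simp add: list_update_append)

lemma Dgood:
  assumes "True \<in> set (QL m D)"
  shows "\<exists>x \<in> legal_moves padj {..<2*m} D.
     6 + rF wa 0 (QL m (D \<union> nbhd padj {..<2*m} x)) + 3*(rF w2 0 (QL m (D \<union> nbhd padj {..<2*m} x)) mod 2)
       + 3*(rF w2 0 (QL m D) mod 2) \<le> rF wa 0 (QL m D)"
proof -
  define Q where "Q = QL m D"
  define g where "g = (if odd (rF w2 0 Q) then w2 else id)"
  have g0: "g 0 = 0" by (simp add: g_def)
  have "rF g 0 Q \<noteq> 0"
  proof (cases "odd (rF w2 0 Q)")
    case True then show ?thesis by (auto simp: g_def odd_pos)
  next
    case False then show ?thesis using rF_id_pos[of Q 0] assms by (simp add: g_def Q_def)
  qed
  then obtain xs L zs where run: "Q = xs @ replicate L True @ zs" "xs \<noteq> []" "last xs = False"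
     "zs \<noteq> []" "hd zs = False" "g L \<noteq> 0" "L \<ge> 1"
    using run_in_QL[of g m D] g0 unfolding Q_def by blast
  have Lmod: "odd (rF w2 0 Q) \<Longrightarrow> L mod 3 = 2" using run(6) by (auto simp: g_def w2_def split: if_splits)
  define i where "i = length xs"
  have lenQ: "length Q = 2*m+4" by (simp add: Q_def)
  have Qi: "Q ! i" using run(1,7) by (simp add: i_def nth_append)
  have ilen: "i < length Q" using run(1,7) by (simp add: i_def)
  have ri: "(1 \<le> i \<and> i \<le> m) \<or> (m+3 \<le> i \<and> i \<le> 2*m+2)" using QL_true[of i m D] Qi ilen by (simp add: Q_def)
  have "\<exists>k. ((1 \<le> k \<and> k \<le> m) \<or> (m+2 \<le> k \<and> k \<le> 2*m+1)) \<and> (Q!k \<or> Q!Suc k)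
       \<and> Q[k:=False, Suc k:=False] = xs @ replicate (min L 2) False @ replicate (L - min L 2) True @ zs"
  proof (cases "L \<ge> 2")
    case True
    have Qi1: "Q ! Suc i" "Suc i < length Q" using run(1) True by (simp_all add: i_def nth_append)
    have ri1: "(1 \<le> Suc i \<and> Suc i \<le> m) \<or> (m+3 \<le> Suc i \<and> Suc i \<le> 2*m+2)"
      using QL_true[of "Suc i" m D] Qi1 by (simp add: Q_def)
    show ?thesis
      apply (rule exI[of _ i])
      using ri ri1 Qi upd2[OF True, of xs zs] True run(1) by (auto simp: i_def min_def)
  next
    case False
    then have L1: "L = 1" using run(7) by simp
    obtain z zs' where zs: "zs = z # zs'" using run(4) by (cases zs) auto
    then have z: "z = False" using run(5) by simp
    obtain xs0 where xs: "xs = xs0 @ [False]" using run(2,3) by (metis append_butlast_last_id)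
    show ?thesis
    proof (cases "i \<le> m")
      case True
      show ?thesis
        apply (rule exI[of _ i])
        using ri True Qi upd1r[of xs zs'] run(1) L1 zs z by (auto simp: i_def)
    next
      case False
      have Qi': "Q = xs0 @ [False] @ [True] @ zs" using run(1) L1 xs by simp
      have "length xs0 = i - 1" using xs by (simp add: i_def)
      then show ?thesis
        apply (intro exI[of _ "i - 1"])
        using ri False Qi upd1l[of xs0 zs] Qi' L1 xs by (auto simp: i_def)
    qed
  qed
  then obtain k where k: "(1 \<le> k \<and> k \<le> m) \<or> (m+2 \<le> k \<and> k \<le> 2*m+1)" "Q!k \<or> Q!Suc k"
    "Q[k:=False, Suc k:=False] = xs @ replicate (min L 2) False @ replicate (L - min L 2) True @ zs" by blast
  obtain x where x: "x < 2*m" "kx m x = k" using kinv[OF k(1)] by blast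
  have legal: "x \<in> legal_moves padj {..<2*m} D" using legal_iff[of x m D] x k(2) by (simp add: Q_def)
  have Q': "QL m (D \<union> nbhd padj {..<2*m} x) = xs @ replicate (min L 2) False @ replicate (L - min L 2) True @ zs"
    using QL_upd[OF x(1), of D] x(2) k(3) by (simp add: Q_def)
  have Q0: "Q = xs @ replicate 0 False @ replicate L True @ zs" using run(1) by simp
  have wa0: "wa 0 = 0" and w20: "w2 0 = 0" by simp_all
  note rv = runval[OF _ run(2-5)]
  show ?thesis
    apply (rule bexI[OF _ legal])
    unfolding Q'
    apply (rule dmove_arith[where X = "rF wa 0 xs" and R = "rF wa 0 (tl zs)" and Y = "rF w2 0 xs" and S = "rF w2 0 (tl zs)" and L = L])
    using rv[of wa 0 L] rv[of w2 0 L] rv[of wa "min L 2" "L - min L 2"] rv[of w2 "min L 2" "L - min L 2"]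
       Q0 Lmod run(7) by (simp_all add: Q_def)
qed


lemma move_dec:
  assumes "x \<in> legal_moves padj {..<2*m} D"
  obtains xs b1 b2 zs where "QL m D = xs @ [b1,b2] @ zs" "b1 \<or> b2"
    "QL m (D \<union> nbhd padj {..<2*m} x) = xs @ [False,False] @ zs"
proof -
  have x: "x < 2*m" "QL m D ! kx m x \<or> QL m D ! Suc (kx m x)" using assms legal_iff by blast+
  have l: "Suc (kx m x) < length (QL m D)" using kx_lt[OF x(1)] by simp
  show ?thesis
    apply (rule that[of "take (kx m x) (QL m D)" "QL m D ! kx m x" "QL m D ! Suc (kx m x)" "drop (Suc (Suc (kx m x))) (QL m D)"])
    using decomp[OF l] x QL_upd[OF x(1), of D] by auto
qed

lemma smove_g:
  assumes "x \<in> legal_moves padj {..<2*m} D"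
  shows "6 + rF wa 0 (QL m (D \<union> nbhd padj {..<2*m} x)) \<le> rF wa 0 (QL m D)
     + 3*(rF w2 0 (QL m D) mod 2) + 3*(rF w2 0 (QL m (D \<union> nbhd padj {..<2*m} x)) mod 2)"
  using assms
proof (rule move_dec)
  fix xs b1 b2 zs assume "QL m D = xs @ [b1,b2] @ zs" "b1 \<or> b2"
    "QL m (D \<union> nbhd padj {..<2*m} x) = xs @ [False,False] @ zs"
  then show ?thesis using smove[of b1 b2 xs zs] by simp
qed

lemma cnt_g:
  assumes "x \<in> legal_moves padj {..<2*m} D"
  shows "rF id 0 (QL m (D \<union> nbhd padj {..<2*m} x)) < rF id 0 (QL m D)
     \<and> rF id 0 (QL m D) \<le> rF id 0 (QL m (D \<union> nbhd padj {..<2*m} x)) + 2"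
  using assms
proof (rule move_dec)
  fix xs b1 b2 zs assume "QL m D = xs @ [b1,b2] @ zs" "b1 \<or> b2"
    "QL m (D \<union> nbhd padj {..<2*m} x) = xs @ [False,False] @ zs"
  then show ?thesis using cnt[of xs b1 b2 zs] by auto
qed

lemma Sone:
  assumes "True \<in> set (QL m D)"
  shows "\<exists>x \<in> legal_moves padj {..<2*m} D.
     rF id 0 (QL m D) = Suc (rF id 0 (QL m (D \<union> nbhd padj {..<2*m} x)))"
proof -
  define Q where "Q = QL m D"
  have "rF id 0 Q \<noteq> 0" using rF_id_pos[of Q 0] assms by (simp add: Q_def)
  then obtain xs L zs where run: "Q = xs @ replicate L True @ zs" "xs \<noteq> []" "last xs = False"
     "zs \<noteq> []" "hd zs = False" "L \<ge> 1"
    using run_in_QL[of id m D] unfolding Q_def by auto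
  define i where "i = length xs"
  have lenQ: "length Q = 2*m+4" by (simp add: Q_def)
  have Qi: "Q ! i" using run(1,6) by (simp add: i_def nth_append)
  have ilen: "i < length Q" using run(1,6) by (simp add: i_def)
  have ri: "(1 \<le> i \<and> i \<le> m) \<or> (m+3 \<le> i \<and> i \<le> 2*m+2)" using QL_true[of i m D] Qi ilen by (simp add: Q_def)
  have inrun: "Q ! j" if "i \<le> j" "j < i + L" for j using run(1) that by (auto simp: i_def nth_append)
  have Qm: "\<not> Q ! (m+1)" by (simp add: Q_def QL_nth qf_def)
  have "\<exists>k. ((1 \<le> k \<and> k \<le> m) \<or> (m+2 \<le> k \<and> k \<le> 2*m+1)) \<and> Q!k \<noteq> Q!Suc k"
  proof (cases "i \<le> m")
    case True
    define k where "k = i + L - 1"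
    have "k \<le> m"
    proof (rule ccontr)
      assume "\<not> k \<le> m"
      then have "Q ! (m+1)" using inrun[of "m+1"] True run(6) by (simp add: k_def)
      then show False using Qm by simp
    qed
    moreover have "Q ! k" using inrun[of k] run(6) by (simp add: k_def)
    moreover have "\<not> Q ! Suc k" using run(1,4,5,6) by (cases zs) (simp_all add: k_def i_def nth_append)
    ultimately show ?thesis using ri True run(6) by (intro exI[of _ k]) (auto simp: k_def)
  next
    case False
    have "\<not> Q ! (i - 1)" using run(1,2,3) by (simp add: i_def nth_append last_conv_nth)
    then show ?thesis using ri False Qi by (intro exI[of _ "i - 1"]) auto
  qed
  then obtain k where k: "(1 \<le> k \<and> k \<le> m) \<or> (m+2 \<le> k \<and> k \<le> 2*m+1)" "Q!k \<noteq> Q!Suc k" by blast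
  obtain x where x: "x < 2*m" "kx m x = k" using kinv[OF k(1)] by blast
  have legal: "x \<in> legal_moves padj {..<2*m} D" using legal_iff[of x m D] x k(2) by (auto simp: Q_def)
  have l: "Suc k < length Q" using k(1) lenQ by auto
  have Q': "QL m (D \<union> nbhd padj {..<2*m} x) = take k Q @ [False,False] @ drop (Suc (Suc k)) Q"
    using QL_upd[OF x(1), of D] x(2) decomp(2)[OF l] by (simp add: Q_def)
  show ?thesis
    apply (rule bexI[OF _ legal])
    unfolding Q'
    using cnt[of "take k Q" "Q!k" "Q!Suc k" "drop (Suc (Suc k)) Q"] decomp(1)[OF l] k(2)
    by (auto simp: Q_def)
qed

lemma A3: "3 * rF w2 acc Q \<le> rF wa acc Q"
proof (induction Q arbitrary: acc)
  case Nil then show ?case unfolding wa_def w2_def by simp presburger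
next
  case (Cons a Q)
  have "3 * w2 acc \<le> wa acc" unfolding wa_def w2_def by presburger
  then show ?case using Cons.IH[of 0] Cons.IH[of "Suc acc"] by auto
qed

lemma nolegal:
  "legal_moves padj {..<2*m} D = {} \<Longrightarrow> True \<notin> set (QL m D)"
  using Sone by blast

lemma rF_noT: "True \<notin> set ps \<Longrightarrow> g 0 = 0 \<Longrightarrow> rF g 0 ps = 0"
  by (induction ps) auto



declare tg_val.simps[simp del]

lemma tv_simp:
  "tg_val padj {..<2*m} b D = (if legal_moves padj {..<2*m} D \<noteq> {} then
       (if b then Min ((\<lambda>x. Suc (tg_val padj {..<2*m} False (D \<union> nbhd padj {..<2*m} x))) ` legal_moves padj {..<2*m} D)
        else Max ((\<lambda>x. Suc (tg_val padj {..<2*m} True (D \<union> nbhd padj {..<2*m} x))) ` legal_moves padj {..<2*m} D))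
     else 0)"
  by (subst tg_val.simps) simp

lemma fin_legal: "finite (legal_moves padj {..<2*m} D)"
  by (rule finite_subset[of _ "{..<2*m}"]) (auto simp: legal_moves_def)

lemma UB:
  "E = padj \<Longrightarrow> V = {..<2*m} \<Longrightarrow>
   (if b then 6 * tg_val E V b D + 3 * (rF w2 0 (QL m D) mod 2) \<le> rF wa 0 (QL m D)
    else 6 * tg_val E V b D \<le> rF wa 0 (QL m D) + 3 * (rF w2 0 (QL m D) mod 2))"
proof (induction E V b D rule: tg_val.induct)
  case (1 E V dmove D)
  define LM where "LM = legal_moves padj {..<2*m} D"
  have fin: "finite LM" unfolding LM_def by (rule fin_legal)
  show ?case
  proof (cases "LM = {}")
    case True
    then have "tg_val E V dmove D = 0" using tv_simp[of m dmove D] 1(3,4) by (simp add: LM_def)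
    moreover have "3 * (rF w2 0 (QL m D) mod 2) \<le> rF wa 0 (QL m D)"
      using A3[of 0 "QL m D"] by linarith
    ultimately show ?thesis by (cases dmove) simp_all
  next
    case False
    have finV: "finite V" using 1(4) by simp
    obtain x0 where x0: "x0 \<in> LM" using False by blast
    have T: "True \<in> set (QL m D)"
    proof -
      have "x0 < 2*m" "QL m D ! kx m x0 \<or> QL m D ! Suc (kx m x0)" using x0 legal_iff unfolding LM_def by blast+
      moreover have "Suc (kx m x0) < length (QL m D)" using kx_lt[OF \<open>x0 < 2*m\<close>] by simp
      ultimately show ?thesis by (metis Suc_lessD nth_mem)
    qed
    show ?thesis
    proof (cases dmove)
      case True
      obtain x where x: "x \<in> LM" and xg: "6 + rF wa 0 (QL m (D \<union> nbhd padj {..<2*m} x)) + 3*(rF w2 0 (QL m (D \<union> nbhd padj {..<2*m} x)) mod 2)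
       + 3*(rF w2 0 (QL m D) mod 2) \<le> rF wa 0 (QL m D)" using Dgood[OF T] unfolding LM_def by blast
      have IH: "6 * tg_val E V False (D \<union> nbhd E V x) \<le> rF wa 0 (QL m (D \<union> nbhd padj {..<2*m} x)) + 3 * (rF w2 0 (QL m (D \<union> nbhd padj {..<2*m} x)) mod 2)"
        using 1(1)[of x] finV False True x 1(3,4) unfolding LM_def by simp
      have "tg_val E V dmove D = Min ((\<lambda>x. Suc (tg_val E V False (D \<union> nbhd E V x))) ` LM)"
        using tv_simp[of m dmove D] 1(3,4) False True by (simp add: LM_def)
      also have "\<dots> \<le> Suc (tg_val E V False (D \<union> nbhd E V x))"
        using fin x by (intro Min_le) auto
      finally show ?thesis using IH xg True 1(3,4) by simp
    next
      case False
      have "tg_val E V dmove D = Max ((\<lambda>x. Suc (tg_val E V True (D \<union> nbhd E V x))) ` LM)"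
        using tv_simp[of m dmove D] 1(3,4) \<open>LM \<noteq> {}\<close> False by (simp add: LM_def)
      also have "\<dots> \<in> (\<lambda>x. Suc (tg_val E V True (D \<union> nbhd E V x))) ` LM"
        using fin \<open>LM \<noteq> {}\<close> by (intro Max_in) auto
      finally obtain x where x: "x \<in> LM" and tx: "tg_val E V dmove D = Suc (tg_val E V True (D \<union> nbhd E V x))" by blast
      have IH: "6 * tg_val E V True (D \<union> nbhd E V x) + 3 * (rF w2 0 (QL m (D \<union> nbhd padj {..<2*m} x)) mod 2) \<le> rF wa 0 (QL m (D \<union> nbhd padj {..<2*m} x))"
        using 1(2)[of x] finV \<open>LM \<noteq> {}\<close> False x 1(3,4) unfolding LM_def by simp
      have sg: "6 + rF wa 0 (QL m (D \<union> nbhd padj {..<2*m} x)) \<le> rF wa 0 (QL m D)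
         + 3*(rF w2 0 (QL m D) mod 2) + 3*(rF w2 0 (QL m (D \<union> nbhd padj {..<2*m} x)) mod 2)"
        using smove_g x unfolding LM_def by blast
      show ?thesis using IH sg tx False 1(3,4) by simp
    qed
  qed
qed

definition lbD :: "nat \<Rightarrow> nat" where "lbD u = (2*u+1) div 3"
definition lbS :: "nat \<Rightarrow> nat" where "lbS u = (if u = 0 then 0 else Suc (lbD (u - 1)))"

lemma lb_arith: "u' < u \<Longrightarrow> u \<le> u' + 2 \<Longrightarrow> lbD u \<le> Suc (lbS u')"
proof (cases "u' = 0")
  case True
  assume "u' < u" "u \<le> u' + 2"
  then have "u = 1 \<or> u = 2" using True by auto
  then show ?thesis by (auto simp: lbD_def lbS_def)
next
  case False
  assume "u' < u" "u \<le> u' + 2"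
  then show ?thesis using False unfolding lbD_def lbS_def by simp
qed

lemma LB:
  "E = padj \<Longrightarrow> V = {..<2*m} \<Longrightarrow>
   (if b then lbD (rF id 0 (QL m D)) else lbS (rF id 0 (QL m D))) \<le> tg_val E V b D"
proof (induction E V b D rule: tg_val.induct)
  case (1 E V dmove D)
  define LM where "LM = legal_moves padj {..<2*m} D"
  have fin: "finite LM" unfolding LM_def by (rule fin_legal)
  show ?case
  proof (cases "LM = {}")
    case True
    then have "rF id 0 (QL m D) = 0" using nolegal[of m D] rF_noT[of "QL m D" id] by (simp add: LM_def)
    then show ?thesis by (cases dmove) (simp_all add: lbD_def lbS_def)
  next
    case False
    have finV: "finite V" using 1(4) by simp
    obtain x0 where x0: "x0 \<in> LM" using False by blast
    have T: "True \<in> set (QL m D)"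
    proof -
      have "x0 < 2*m" "QL m D ! kx m x0 \<or> QL m D ! Suc (kx m x0)" using x0 legal_iff unfolding LM_def by blast+
      moreover have "Suc (kx m x0) < length (QL m D)" using kx_lt[OF \<open>x0 < 2*m\<close>] by simp
      ultimately show ?thesis by (metis Suc_lessD nth_mem)
    qed
    show ?thesis
    proof (cases dmove)
      case True
      have "tg_val E V dmove D = Min ((\<lambda>x. Suc (tg_val E V False (D \<union> nbhd E V x))) ` LM)"
        using tv_simp[of m dmove D] 1(3,4) False True by (simp add: LM_def)
      moreover have "lbD (rF id 0 (QL m D)) \<le> Min ((\<lambda>x. Suc (tg_val E V False (D \<union> nbhd E V x))) ` LM)"
      proof (subst Min_ge_iff)
        show "finite ((\<lambda>x. Suc (tg_val E V False (D \<union> nbhd E V x))) ` LM)" using fin by simp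
        show "(\<lambda>x. Suc (tg_val E V False (D \<union> nbhd E V x))) ` LM \<noteq> {}" using False by simp
        show "\<forall>a\<in>(\<lambda>x. Suc (tg_val E V False (D \<union> nbhd E V x))) ` LM. lbD (rF id 0 (QL m D)) \<le> a"
        proof
          fix a assume "a \<in> (\<lambda>x. Suc (tg_val E V False (D \<union> nbhd E V x))) ` LM"
          then obtain x where x: "x \<in> LM" and a: "a = Suc (tg_val E V False (D \<union> nbhd E V x))" by blast
          have IH: "lbS (rF id 0 (QL m (D \<union> nbhd padj {..<2*m} x))) \<le> tg_val E V False (D \<union> nbhd E V x)"
            using 1(1)[of x] finV \<open>LM \<noteq> {}\<close> True x 1(3,4) unfolding LM_def by simp
          have c: "rF id 0 (QL m (D \<union> nbhd padj {..<2*m} x)) < rF id 0 (QL m D)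
             \<and> rF id 0 (QL m D) \<le> rF id 0 (QL m (D \<union> nbhd padj {..<2*m} x)) + 2"
            using cnt_g x unfolding LM_def by blast
          show "lbD (rF id 0 (QL m D)) \<le> a" using lb_arith[OF conjunct1[OF c] conjunct2[OF c]] IH a by simp
        qed
      qed
      ultimately show ?thesis using True by simp
    next
      case False
      obtain x where x: "x \<in> LM" and xs: "rF id 0 (QL m D) = Suc (rF id 0 (QL m (D \<union> nbhd padj {..<2*m} x)))"
        using Sone[OF T] unfolding LM_def by blast
      have IH: "lbD (rF id 0 (QL m (D \<union> nbhd padj {..<2*m} x))) \<le> tg_val E V True (D \<union> nbhd E V x)"
        using 1(2)[of x] finV \<open>LM \<noteq> {}\<close> False x 1(3,4) unfolding LM_def by simp
      have "tg_val E V dmove D = Max ((\<lambda>x. Suc (tg_val E V True (D \<union> nbhd E V x))) ` LM)"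
        using tv_simp[of m dmove D] 1(3,4) \<open>LM \<noteq> {}\<close> False by (simp add: LM_def)
      moreover have "Suc (tg_val E V True (D \<union> nbhd E V x)) \<le> Max ((\<lambda>x. Suc (tg_val E V True (D \<union> nbhd E V x))) ` LM)"
        using fin x by (intro Max_ge) auto
      ultimately show ?thesis using IH xs False by (simp add: lbS_def)
    qed
  qed
qed



lemma QL_empty: "QL m {} = False # replicate m True @ False # False # replicate m True @ [False]"
proof (rule nth_equalityI)
  show "length (QL m {}) = length (False # replicate m True @ False # False # replicate m True @ [False])" by simp
  fix i assume "i < length (QL m {})"
  then have i: "i < 2*m+4" by simp
  show "QL m {} ! i = (False # replicate m True @ False # False # replicate m True @ [False]) ! i"
    using i by (auto simp: QL_nth qf_def nth_Cons' nth_append)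
qed

lemma odd_neq: "Suc (2*x) \<noteq> 2*(y::nat)" by presburger

lemma qf_single:
  assumes v: "v < 2*m"
  shows "qf m {v} i = (qf m {} i \<and> i \<noteq> (if even v then Suc (v div 2) else m + 3 + v div 2))"
proof (cases "even v")
  case True
  then obtain j where j: "v = 2*j" by (metis evenE)
  have "j < m" using v j by simp
  then show ?thesis unfolding qf_def j using odd_neq[symmetric] odd_neq by auto
next
  case False
  then obtain j where j: "v = 2*j+1" by (metis oddE)
  have "j < m" using v j by simp
  then show ?thesis unfolding qf_def j using odd_neq[symmetric] odd_neq by auto
qed

lemma QL_single: "v < 2*m \<Longrightarrow> QL m {v} = (QL m {})[(if even v then Suc (v div 2) else m + 3 + v div 2) := False]"
proof (rule nth_equalityI)
  assume v: "v < 2*m"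
  show "length (QL m {v}) = length ((QL m {})[(if even v then Suc (v div 2) else m + 3 + v div 2) := False])" by simp
  fix i assume "i < length (QL m {v})"
  then have i: "i < 2*m+4" by simp
  show "QL m {v} ! i = (QL m {})[(if even v then Suc (v div 2) else m + 3 + v div 2) := False] ! i"
    using i v by (auto simp: QL_nth qf_single nth_list_update)
qed

lemma rep_upd: "j < m \<Longrightarrow> (replicate m True)[j := False] = replicate j True @ False # replicate (m - Suc j) True"
proof (induction m arbitrary: j)
  case 0 then show ?case by simp
next
  case (Suc m) then show ?case by (cases j) auto
qed

lemma final_arith:
  assumes "6 * t + 3 * ((w2 j + w2 j' + w2 m) mod 2) \<le> wa j + wa j' + wa m" "j + j' + 1 = m" "m = 3*k+2"
  shows "t \<le> 4*k+2"
proof -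
  have s: "j + j' + m = 6*k+3" using assms(2,3) by simp
  have mm: "m mod 3 = 2" using assms(3) by presburger
  have wm: "wa m = 4*m + 1" "w2 m = 1" using mm by (simp_all add: wa_def w2_def)
  have "j mod 3 = 0 \<or> j mod 3 = 1 \<or> j mod 3 = 2" by auto
  then show ?thesis
  proof (elim disjE)
    assume h: "j mod 3 = 0"
    then have "j' mod 3 = 1" using assms(2,3) by presburger
    then have "wa j + wa j' + wa m = 4*(j + j' + m) + 3" "w2 j + w2 j' + w2 m = 1"
      using h wm by (simp_all add: wa_def w2_def)
    then show ?thesis using assms(1) s by simp
  next
    assume h: "j mod 3 = 1"
    then have "j' mod 3 = 0" using assms(2,3) by presburger
    then have "wa j + wa j' + wa m = 4*(j + j' + m) + 3" "w2 j + w2 j' + w2 m = 1"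
      using h wm by (simp_all add: wa_def w2_def)
    then show ?thesis using assms(1) s by simp
  next
    assume h: "j mod 3 = 2"
    then have "j' mod 3 = 2" using assms(2,3) by presburger
    then have "wa j + wa j' + wa m = 4*(j + j' + m) + 3" "w2 j + w2 j' + w2 m = 3"
      using h wm by (simp_all add: wa_def w2_def)
    then show ?thesis using assms(1) s by simp
  qed
qed

lemma rv_single:
  assumes "v < 2*m"
  shows "\<exists>j j'. j + j' + 1 = m \<and> (\<forall>g. g 0 = 0 \<longrightarrow> rF g 0 (QL m {v}) = g j + g j' + g m)"
proof (cases "even v")
  case True
  define j where "j = v div 2"
  have j: "j < m" using assms True by (auto simp: j_def)
  have "QL m {v} = False # (replicate j True @ False # replicate (m - Suc j) True) @ False # False # replicate m True @ [False]"
    using QL_single[OF assms] True rep_upd[OF j] j by (simp add: QL_empty j_def list_update_append)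
  then have "\<forall>g. g 0 = 0 \<longrightarrow> rF g 0 (QL m {v}) = g j + g (m - Suc j) + g m" by (simp add: rF_rep)
  moreover have "j + (m - Suc j) + 1 = m" using j by simp
  ultimately show ?thesis by blast
next
  case False
  define j where "j = v div 2"
  have j: "j < m" using assms False by (auto simp: j_def)
  have "QL m {v} = False # replicate m True @ False # False # (replicate j True @ False # replicate (m - Suc j) True) @ [False]"
  proof -
    have ua2: "(a # xs @ ys)[Suc (length xs + k) := x] = a # xs @ ys[k := x]" for a and xs ys :: "bool list" and k x
      by (simp add: list_update_append)
    have idx: "(if even v then Suc (v div 2) else m + 3 + v div 2) = Suc (length (replicate m True) + Suc (Suc j))"
      using False by (simp add: j_def)
    have "QL m {v} = False # replicate m True @ (False # False # replicate m True @ [False])[Suc (Suc j) := False]"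
      using QL_single[OF assms] unfolding idx QL_empty ua2 .
    also have "\<dots> = False # replicate m True @ False # False # (replicate m True @ [False])[j := False]"
      by simp
    also have "\<dots> = False # replicate m True @ False # False # (replicate j True @ False # replicate (m - Suc j) True) @ [False]"
      using rep_upd[OF j] j by (simp add: list_update_append)
    finally show ?thesis .
  qed
  then have "\<forall>g. g 0 = 0 \<longrightarrow> rF g 0 (QL m {v}) = g j + g (m - Suc j) + g m" by (simp add: rF_rep)
  moreover have "j + (m - Suc j) + 1 = m" using j by simp
  ultimately show ?thesis by blast
qed



lemma transfer:
  assumes bij: "bij_betw f {..<n} V" and adj: "\<forall>i<n. \<forall>j<n. E (f i) (f j) \<longleftrightarrow> padj i j"
  shows "E' = padj \<Longrightarrow> V' = {..<n} \<Longrightarrow> D \<subseteq> {..<n} \<Longrightarrow> tg_val E V b (f ` D) = tg_val E' V' b D"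
proof (induction E' V' b D rule: tg_val.induct)
  case (1 E' V' dmove D)
  have inj: "inj_on f {..<n}" and img: "f ` {..<n} = V" using bij by (auto simp: bij_betw_def)
  have finV: "finite V" using img by auto
  have nbf: "nbhd E V (f x) = f ` nbhd padj {..<n} x" if "x < n" for x
  proof
    show "nbhd E V (f x) \<subseteq> f ` nbhd padj {..<n} x"
    proof
      fix y assume "y \<in> nbhd E V (f x)"
      then have y: "y \<in> V" "E (f x) y" by (auto simp: nbhd_def)
      then obtain j where j: "j < n" "y = f j" using img by auto
      then show "y \<in> f ` nbhd padj {..<n} x" using y adj that by (auto simp: nbhd_def)
    qed
    show "f ` nbhd padj {..<n} x \<subseteq> nbhd E V (f x)"
      using adj that img by (auto simp: nbhd_def)
  qed
  have nbsub: "nbhd padj {..<n} x \<subseteq> {..<n}" for x by (auto simp: nbhd_def)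
  have subiff: "f ` A \<subseteq> f ` B \<longleftrightarrow> A \<subseteq> B" if "A \<subseteq> {..<n}" "B \<subseteq> {..<n}" for A B
    using inj_on_image_mem_iff[OF inj] that by blast
  have lm: "legal_moves E V (f ` D) = f ` legal_moves padj {..<n} D"
  proof
    show "legal_moves E V (f ` D) \<subseteq> f ` legal_moves padj {..<n} D"
    proof
      fix y assume "y \<in> legal_moves E V (f ` D)"
      then have y: "y \<in> V" "\<not> nbhd E V y \<subseteq> f ` D" by (auto simp: legal_moves_def)
      then obtain x where x: "x < n" "y = f x" using img by auto
      then have "\<not> nbhd padj {..<n} x \<subseteq> D" using y nbf subiff[OF nbsub 1(5)] by simp
      then show "y \<in> f ` legal_moves padj {..<n} D" using x by (auto simp: legal_moves_def)
    qed
    show "f ` legal_moves padj {..<n} D \<subseteq> legal_moves E V (f ` D)"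
    proof
      fix y assume "y \<in> f ` legal_moves padj {..<n} D"
      then obtain x where x: "x < n" "y = f x" "\<not> nbhd padj {..<n} x \<subseteq> D" by (auto simp: legal_moves_def)
      then have "\<not> nbhd E V y \<subseteq> f ` D" using nbf subiff[OF nbsub 1(5)] by simp
      then show "y \<in> legal_moves E V (f ` D)" using x img by (auto simp: legal_moves_def)
    qed
  qed
  define LM where "LM = legal_moves padj {..<n} D"
  have LMn: "LM \<subseteq> {..<n}" by (auto simp: LM_def legal_moves_def)
  have eqF: "(\<lambda>y. Suc (tg_val E V c (f ` D \<union> nbhd E V y))) ` (f ` LM) = (\<lambda>x. Suc (tg_val E' V' c (D \<union> nbhd E' V' x))) ` LM"
    if IH: "\<And>x. x \<in> LM \<Longrightarrow> tg_val E V c (f ` (D \<union> nbhd E' V' x)) = tg_val E' V' c (D \<union> nbhd E' V' x)" for c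
  proof -
    have "(\<lambda>y. Suc (tg_val E V c (f ` D \<union> nbhd E V y))) ` (f ` LM) = (\<lambda>x. Suc (tg_val E V c (f ` D \<union> nbhd E V (f x)))) ` LM"
      by (simp add: image_image)
    also have "\<dots> = (\<lambda>x. Suc (tg_val E' V' c (D \<union> nbhd E' V' x))) ` LM"
    proof (rule image_cong[OF refl])
      fix x assume x: "x \<in> LM"
      then have "x < n" using LMn by auto
      then have "f ` D \<union> nbhd E V (f x) = f ` (D \<union> nbhd E' V' x)" using nbf[of x] 1(3,4) by (simp add: image_Un)
      then show "Suc (tg_val E V c (f ` D \<union> nbhd E V (f x))) = Suc (tg_val E' V' c (D \<union> nbhd E' V' x))"
        using IH[OF x] by simp
    qed
    finally show ?thesis .
  qed
  show ?case
  proof (cases "LM = {}")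
    case True
    then show ?thesis using lm finV 1(3,4) by (simp add: tg_val.simps[of E V] tg_val.simps[of padj "{..<n}"] LM_def)
  next
    case False
    have IH1: "tg_val E V False (f ` (D \<union> nbhd E' V' x)) = tg_val E' V' False (D \<union> nbhd E' V' x)" if "x \<in> LM" "dmove" for x
      using 1(1)[of x] that False 1(3,4,5) nbsub by (simp add: LM_def)
    have IH2: "tg_val E V True (f ` (D \<union> nbhd E' V' x)) = tg_val E' V' True (D \<union> nbhd E' V' x)" if "x \<in> LM" "\<not> dmove" for x
      using 1(2)[of x] that False 1(3,4,5) nbsub by (simp add: LM_def)
    show ?thesis
    proof (cases dmove)
      case True
      show ?thesis
        using eqF[of False] IH1 True False lm finV 1(3,4)
        by (simp add: tg_val.simps[of E V] tg_val.simps[of padj "{..<n}"] LM_def)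
    next
      case False
      show ?thesis
        using eqF[of True] IH2 False \<open>LM \<noteq> {}\<close> lm finV 1(3,4)
        by (simp add: tg_val.simps[of E V] tg_val.simps[of padj "{..<n}"] LM_def)
    qed
  qed
qed


theorem lemma3p6:
  fixes E :: "'a \<Rightarrow> 'a \<Rightarrow> bool" and V :: "'a set" and n :: nat and v :: 'a
  assumes "n \<ge> 4" and "n mod 6 = 4"
    and "iso_path E V n"
    and "v \<in> V"
  shows "gamma_tg_pre E V v \<le> gamma_tg E V - 1"
proof -
  obtain f where f: "bij_betw f {..<n} V" "\<forall>i<n. \<forall>j<n. E (f i) (f j) \<longleftrightarrow> (i + 1 = j \<or> j + 1 = i)"
    using assms(3) unfolding iso_path_def by blast
  have adj: "\<forall>i<n. \<forall>j<n. E (f i) (f j) \<longleftrightarrow> padj i j" using f(2) by (simp add: padj_def)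
  define k where "k = n div 6"
  define m where "m = 3*k+2"
  have n6: "n = 6*k+4" using assms(2) unfolding k_def by presburger
  have n: "n = 2*m" using n6 by (simp add: m_def)
  have img: "f ` {..<n} = V" using f(1) by (simp add: bij_betw_def)
  have g1: "gamma_tg E V = tg_val padj {..<2*m} True {}"
    unfolding gamma_tg_def using transfer[OF f(1) adj, of padj "{..<n}" "{}" True] n by simp
  have lb: "lbD (rF id 0 (QL m {})) \<le> tg_val padj {..<2*m} True {}"
    using LB[of padj "{..<2*m}" m True "{}"] by simp
  have c0: "rF id 0 (QL m {}) = 2*m" by (simp add: QL_empty rF_rep)
  have "lbD (2*m) = 4*k+3" unfolding lbD_def m_def by simp
  then have G: "4*k+3 \<le> gamma_tg E V" using lb c0 g1 by simp
  obtain w where w: "w < n" "v = f w" using img assms(4) by auto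
  have g2: "gamma_tg_pre E V v = tg_val padj {..<2*m} True {w}"
    unfolding gamma_tg_pre_def using transfer[OF f(1) adj, of padj "{..<n}" "{w}" True] n w by simp
  have ub: "6 * tg_val padj {..<2*m} True {w} + 3 * (rF w2 0 (QL m {w}) mod 2) \<le> rF wa 0 (QL m {w})"
    using UB[of padj "{..<2*m}" m True "{w}"] by simp
  obtain j j' where jj: "j + j' + 1 = m" "\<forall>g. g 0 = 0 \<longrightarrow> rF g 0 (QL m {w}) = g j + g j' + g m"
    using rv_single[of w m] w n by auto
  have "rF wa 0 (QL m {w}) = wa j + wa j' + wa m" "rF w2 0 (QL m {w}) = w2 j + w2 j' + w2 m"
    using jj(2) by simp_all
  then have "tg_val padj {..<2*m} True {w} \<le> 4*k+2"
    using final_arith[of "tg_val padj {..<2*m} True {w}" j j' m k] ub jj(1) m_def by simp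
  then show ?thesis using G g2 by simp
qed


end
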